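(* Let $G$ be a finite abelian group, let $B\subseteq G$ be a regular Bohr set of rank $d$, and let $A\subseteq B$ have relative density $\mu_B(A)=\alpha$. Let $C>0$ be a constant such that $|B|\ge(1-\frac1{20})|B_{1+\delta}|$, where $\delta=1/(Cd)$, and let $B',B''\subseteq B_\delta$ be nonempty. Then either (1) there is an $x\in G$ such that $1_A*\mu_{B'}(x)\ge\frac{8}{10}\alpha$ and $1_A*\mu_{B''}(x)\ge\frac{8}{10}\alpha$; or (2) $\|1_A*\mu_{B'}\|_\infty\ge1.1\alpha$ or $\|1_A*\mu_{B''}\|_\infty\ge1.1\alpha$.
   Context: For a finite abelian group $G$ with dual group $\widehat G$, a Bohr set with generating set $\Gamma\subseteq\widehat G$ and radius $\rho\ge0$ is $B(\Gamma,\rho)=\{x\in G:|1-\gamma(x)|\le\rho\text{ for all }\gamma\in\Gamma\}$; its rank is $|\Gamma|$. For $B=B(\Gamma,\rho)$ and $\delta>0$, $B_\delta:=B(\Gamma,\delta\rho)$. A Bohr set $B$ of rank $d$ is regular if for all $|\delta|\le1/(100d)$, $(1-100d|\delta|)|B|\le|B_{1+\delta}|\le(1+100d|\delta|)|B|$. $\mu_B(A)=|A\cap B|/|B|$, $\mu_T=1_T/|T|$, $f*g(x)=\sum_yf(y)g(x-y)$, $\|f\|_\infty=\sup_x|f(x)|$. *)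

theory Defs
  imports Complex_Main
begin

definition dual_group :: "('a::{ab_group_add,finite} \<Rightarrow> complex) set" where
  "dual_group = {\<gamma>. (\<forall>x y. \<gamma> (x + y) = \<gamma> x * \<gamma> y) \<and> (\<forall>x. norm (\<gamma> x) = 1)}"

definition bohr :: "('a::{ab_group_add,finite} \<Rightarrow> complex) set \<Rightarrow> real \<Rightarrow> 'a set" where
  "bohr \<Gamma> \<rho> = {x. \<forall>\<gamma>\<in>\<Gamma>. norm (1 - \<gamma> x) \<le> \<rho>}"

definition regular_bohr :: "('a::{ab_group_add,finite} \<Rightarrow> complex) set \<Rightarrow> real \<Rightarrow> bool" where
  "regular_bohr \<Gamma> \<rho> \<longleftrightarrow>
     (\<forall>\<delta>::real. \<bar>\<delta>\<bar> \<le> 1 / (100 * real (card \<Gamma>)) \<longrightarrow>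
        (1 - 100 * real (card \<Gamma>) * \<bar>\<delta>\<bar>) * real (card (bohr \<Gamma> \<rho>))
          \<le> real (card (bohr \<Gamma> ((1 + \<delta>) * \<rho>))) \<and>
        real (card (bohr \<Gamma> ((1 + \<delta>) * \<rho>)))
          \<le> (1 + 100 * real (card \<Gamma>) * \<bar>\<delta>\<bar>) * real (card (bohr \<Gamma> \<rho>)))"

definition ind :: "'a set \<Rightarrow> 'a \<Rightarrow> real" where
  "ind S x = (if x \<in> S then 1 else 0)"

definition unif :: "'a set \<Rightarrow> 'a \<Rightarrow> real" where
  "unif T x = ind T x / real (card T)"

definition conv :: "('a::{ab_group_add,finite} \<Rightarrow> real) \<Rightarrow> ('a \<Rightarrow> real) \<Rightarrow> 'a \<Rightarrow> real" where
  "conv f g x = (\<Sum>y\<in>UNIV. f y * g (x - y))"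

definition sup_norm :: "('a::finite \<Rightarrow> real) \<Rightarrow> real" where
  "sup_norm f = Max (range (\<lambda>x. \<bar>f x\<bar>))"

end

theory Submission
  imports Defs
begin

lemma conv_nonneg: "conv (ind A) (unif S) x \<ge> 0"
  unfolding conv_def unif_def ind_def by (intro sum_nonneg) auto

lemma sum_conv:
  fixes A S P :: "'a::{ab_group_add,finite} set"
  assumes "\<forall>a\<in>A. \<forall>s\<in>S. a + s \<in> P" "S \<noteq> {}"
  shows "(\<Sum>x\<in>P. conv (ind A) (unif S) x) = real (card A)"
proof -
  have "(\<Sum>x\<in>P. conv (ind A) (unif S) x) = (\<Sum>y\<in>UNIV. \<Sum>x\<in>P. ind A y * unif S (x - y))"
    unfolding conv_def by (rule sum.swap)
  also have "\<dots> = (\<Sum>y\<in>UNIV. if y \<in> A then 1 else 0)"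
  proof (rule sum.cong[OF refl])
    fix y
    show "(\<Sum>x\<in>P. ind A y * unif S (x - y)) = (if y \<in> A then 1 else 0)"
    proof (cases "y \<in> A")
      case True
      have "(\<Sum>x\<in>P. ind A y * unif S (x - y)) = (\<Sum>x\<in>P. ind S (x - y)) / real (card S)"
        using True by (simp add: ind_def unif_def sum_divide_distrib)
      also have "(\<Sum>x\<in>P. ind S (x - y)) = real (card (P \<inter> {x. x - y \<in> S}))"
        unfolding ind_def by (simp add: sum.If_cases)
      also have "P \<inter> {x. x - y \<in> S} = (\<lambda>s. y + s) ` S"
        using assms(1) True by (auto simp: image_iff) (metis add.commute diff_add_cancel)
      also have "card \<dots> = card S" by (rule card_image) (simp add: inj_on_def)
      finally show ?thesis using True assms(2) by simp
    qed (simp add: ind_def)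
  qed
  also have "\<dots> = real (card A)" by (simp add: sum.If_cases)
  finally show ?thesis .
qed

lemma le_sup_norm: "f x \<le> sup_norm (f :: 'a::finite \<Rightarrow> real)"
proof -
  have "\<bar>f x\<bar> \<le> sup_norm f" unfolding sup_norm_def by (rule Max_ge) auto
  thus ?thesis by simp
qed

theorem lemma5p3:
  fixes \<Gamma> :: "('a::{ab_group_add,finite} \<Rightarrow> complex) set"
    and \<rho> \<alpha> C :: real and d :: nat and A B' B'' :: "'a set"
  assumes "\<Gamma> \<subseteq> dual_group" and "\<rho> \<ge> 0" and "card \<Gamma> = d"
    and "regular_bohr \<Gamma> \<rho>"
    and "A \<subseteq> bohr \<Gamma> \<rho>"
    and "\<alpha> = real (card (A \<inter> bohr \<Gamma> \<rho>)) / real (card (bohr \<Gamma> \<rho>))"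
    and "C > 0"
    and "real (card (bohr \<Gamma> \<rho>)) \<ge> (1 - 1/20) * real (card (bohr \<Gamma> ((1 + 1 / (C * real d)) * \<rho>)))"
    and "B' \<subseteq> bohr \<Gamma> ((1 / (C * real d)) * \<rho>)" and "B' \<noteq> {}"
    and "B'' \<subseteq> bohr \<Gamma> ((1 / (C * real d)) * \<rho>)" and "B'' \<noteq> {}"
  shows "(\<exists>x. conv (ind A) (unif B') x \<ge> 8/10 * \<alpha> \<and> conv (ind A) (unif B'') x \<ge> 8/10 * \<alpha>)
         \<or> sup_norm (conv (ind A) (unif B')) \<ge> 1.1 * \<alpha>
         \<or> sup_norm (conv (ind A) (unif B'')) \<ge> 1.1 * \<alpha>"
proof (rule ccontr)
  assume H: "\<not> ?thesis"
  define \<delta> where "\<delta> = 1 / (C * real d)"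
  define B where "B = bohr \<Gamma> \<rho>"
  define P where "P = bohr \<Gamma> ((1 + \<delta>) * \<rho>)"
  define f where "f = conv (ind A) (unif B')"
  define g where "g = conv (ind A) (unif B'')"
  have AB: "A \<inter> B = A" using assms(5) B_def by auto
  have tri: "a + b \<in> P" if "a \<in> A" "b \<in> bohr \<Gamma> (\<delta> * \<rho>)" for a b
    unfolding P_def bohr_def
  proof (intro CollectI ballI)
    fix \<gamma> assume g: "\<gamma> \<in> \<Gamma>"
    hence hom: "\<gamma> (a + b) = \<gamma> a * \<gamma> b" and n: "norm (\<gamma> a) = 1"
      using assms(1) unfolding dual_group_def by auto
    have "1 - \<gamma> (a + b) = (1 - \<gamma> a) + \<gamma> a * (1 - \<gamma> b)" using hom by (simp add: algebra_simps)
    hence "norm (1 - \<gamma> (a + b)) \<le> norm (1 - \<gamma> a) + norm (\<gamma> a * (1 - \<gamma> b))"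
      by (metis norm_triangle_ineq)
    also have "\<dots> = norm (1 - \<gamma> a) + norm (1 - \<gamma> b)" using n by (simp add: norm_mult)
    also have "\<dots> \<le> \<rho> + \<delta> * \<rho>"
      using that g assms(5) unfolding bohr_def by (intro add_mono) auto
    finally show "norm (1 - \<gamma> (a + b)) \<le> (1 + \<delta>) * \<rho>" by (simp add: algebra_simps)
  qed
  have sf: "(\<Sum>x\<in>P. f x) = real (card A)"
    unfolding f_def using tri assms(9,10) \<delta>_def by (intro sum_conv) auto
  have sg: "(\<Sum>x\<in>P. g x) = real (card A)"
    unfolding g_def using tri assms(11,12) \<delta>_def by (intro sum_conv) auto
  have apos: "\<alpha> > 0"
  proof (rule ccontr)
    assume "\<not> \<alpha> > 0"
    hence "8/10 * \<alpha> \<le> 0" by simp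
    hence "\<exists>x. conv (ind A) (unif B') x \<ge> 8/10 * \<alpha> \<and> conv (ind A) (unif B'') x \<ge> 8/10 * \<alpha>"
      using conv_nonneg[of A B' 0] conv_nonneg[of A B'' 0] by (intro exI[of _ 0]) linarith
    thus False using H by blast
  qed
  hence Bpos: "card B > 0" using assms(6) B_def by (cases "card B = 0") auto
  have cA: "real (card A) = \<alpha> * card B" using assms(6) AB B_def Bpos by (auto simp: field_simps)
  have Ane: "A \<noteq> {}" using cA apos Bpos by auto
  then obtain a where "a \<in> A" by auto
  moreover obtain b where "b \<in> B'" using assms(10) by auto
  ultimately have "a + b \<in> P" using tri assms(9) \<delta>_def by auto
  hence Pne: "P \<noteq> {}" by auto
  have pt: "f x + g x < 1.9 * \<alpha>" for x
  proof -
    have "f x < 1.1 * \<alpha>" "g x < 1.1 * \<alpha>"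
      using H le_sup_norm[of f x] le_sup_norm[of g x] f_def g_def by force+
    moreover have "f x < 8/10 * \<alpha> \<or> g x < 8/10 * \<alpha>"
    proof (rule ccontr)
      assume "\<not> (f x < 8/10 * \<alpha> \<or> g x < 8/10 * \<alpha>)"
      hence "\<exists>x. conv (ind A) (unif B') x \<ge> 8/10 * \<alpha> \<and> conv (ind A) (unif B'') x \<ge> 8/10 * \<alpha>"
        unfolding f_def g_def by (intro exI[of _ x]) linarith
      thus False using H by blast
    qed
    ultimately show ?thesis by linarith
  qed
  have "2 * real (card A) = (\<Sum>x\<in>P. f x + g x)" using sf sg by (simp add: sum.distrib)
  also have "\<dots> < (\<Sum>x\<in>P. 1.9 * \<alpha>)"
    by (rule sum_strict_mono) (use Pne pt in auto)
  also have "\<dots> = real (card P) * 1.9 * \<alpha>" by simp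
  also have "\<dots> \<le> 2 * real (card A)"
  proof -
    have "real (card P) * (19/20) \<le> real (card B)" using assms(8) B_def P_def \<delta>_def by simp
    hence "2 * \<alpha> * (real (card P) * (19/20)) \<le> 2 * \<alpha> * real (card B)" using apos
      by (intro mult_left_mono) auto
    hence "real (card P) * 1.9 * \<alpha> \<le> 2 * \<alpha> * real (card B)" by (simp add: algebra_simps)
    thus ?thesis using cA by simp
  qed
  finally show False by simp
qed

end
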